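(* For every integer $n\ge1$, $$D(n):=\sum_{\substack{1\le d\le n\\ d\equiv n \bmod 2}} d\binom{n}{\frac{n-d}2}^2=\begin{cases} n\binom{n-1}{\frac{n-1}2}^2 & n\text{ odd},\\[4pt] n\binom{n-1}{\frac n2}^2 & n\text{ even}.\end{cases}$$ *)

theory Defs
  imports Main
begin

end

theory Submission
  imports Defs
begin

lemma a1: assumes "(d::nat) \<ge> 1" "d \<le> n" "d mod 2 = n mod 2" shows "n - d = 2 * ((n - d) div 2)"
proof -
  have "n = 2*(n div 2) + n mod 2" "d = 2*(d div 2) + d mod 2" by simp_all
  then have "n - d = 2 * (n div 2 - d div 2)" using assms by linarith
  then show ?thesis by simp
qed
lemma a3: assumes "(d::nat) \<ge> 1" "d \<le> n" "d mod 2 = n mod 2" shows "(n - d) div 2 \<le> (n - 1) div 2"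
  using assms by (simp add: div_le_mono)
lemma a2: assumes "(k::nat) \<le> (n - 1) div 2" "n \<ge> 1" shows "1 \<le> n - 2*k" "(n - 2*k) mod 2 = n mod 2"
proof -
  have "2 * ((n - 1) div 2) \<le> n - 1" by simp
  then show "1 \<le> n - 2*k" using assms by linarith
  then have "n = (n - 2*k) + 2*k" by simp
  then have "n mod 2 = (n - 2*k + 2*k) mod 2" by simp
  then show "(n - 2*k) mod 2 = n mod 2" by simp
qed
lemma a4: assumes "\<not> odd (n::nat)" "n \<ge> 1" shows "n div 2 \<le> n - 1" "n - 1 - n div 2 = (n - 1) div 2"
proof -
  obtain q where q: "n = 2*q" using assms by auto
  then have "q \<ge> 1" using assms by simp
  then have "2*q - 1 = 1 + 2*(q-1)" by simp
  then have "(2*q - 1) div 2 = q - 1" by simp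
  then show "n div 2 \<le> n - 1" "n - 1 - n div 2 = (n - 1) div 2" using q \<open>q\<ge>1\<close> by auto
qed

lemma step_id:
  fixes n k :: nat
  assumes "2 * (k + 1) < n"
  shows "(n - 2 * (k + 1)) * (n choose (k + 1))^2 + n * ((n - 1) choose k)^2
         = n * ((n - 1) choose (k + 1))^2"
proof -
  obtain p where p: "n = Suc p" using assms by (cases n) auto
  have c: "n choose (k+1) = ((n-1) choose k) + ((n-1) choose (k+1))" using p by simp
  have e1: "(k+1) * (n choose (k+1)) = n * ((n - 1) choose k)"
    using binomial_absorption[of k n] by simp
  have e2: "(n-(k+1)) * (n choose (k+1)) = n * ((n - 1) choose (k+1))"
    using binomial_absorb_comp[of n "k+1"] by simp
  define A where "A = int ((n-1) choose (k+1))"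
  define B where "B = int ((n-1) choose k)"
  define C where "C = int (n choose (k+1))"
  have c': "C = A + B" unfolding A_def B_def C_def using c by simp
  have e1': "(int k+1) * C = int n * B" unfolding B_def C_def using e1
    by (metis of_nat_Suc of_nat_mult Suc_eq_plus1 add.commute)
  have kn: "int (n - (k+1)) = int n - (int k + 1)" using assms by simp
  have "int ((n-(k+1)) * (n choose (k+1))) = int (n * ((n - 1) choose (k+1)))" using e2 by simp
  then have e2': "(int n - (int k+1)) * C = int n * A" unfolding A_def C_def kn[symmetric] by simp
  have "(int n - 2*(int k+1)) * C^2 + int n * B^2 = int n * A^2"
  proof -
    have "(int n - 2*(int k+1)) * C^2 = ((int n - (int k+1)) * C - (int k+1) * C) * C"
      by (simp add: power2_eq_square algebra_simps)
    also have "... = int n * (A - B) * (A + B)" using e1' e2' c' by (simp add: algebra_simps)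
    finally show ?thesis by (simp add: power2_eq_square algebra_simps)
  qed
  then have "int ((n - 2 * (k + 1)) * (n choose (k + 1))^2 + n * ((n - 1) choose k)^2)
         = int (n * ((n - 1) choose (k + 1))^2)"
    using assms unfolding A_def B_def C_def by (simp add: of_nat_diff add.commute)
  then show ?thesis by (simp only: of_nat_eq_iff)
qed

lemma tele:
  fixes n m :: nat
  assumes "2 * m < n"
  shows "(\<Sum>k\<le>m. (n - 2*k) * (n choose k)^2) = n * ((n - 1) choose m)^2"
  using assms
proof (induction m)
  case 0 then show ?case by simp
next
  case (Suc m)
  then have "(\<Sum>k\<le>Suc m. (n - 2*k) * (n choose k)^2)
      = n * ((n - 1) choose m)^2 + (n - 2 * (m + 1)) * (n choose (m + 1))^2" by simp
  also have "... = n * ((n - 1) choose (m+1))^2" using step_id[of m n] Suc.prems by simp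
  finally show ?case by simp
qed

theorem mainTheorem9:
  fixes n :: nat
  assumes "n \<ge> 1"
  shows "(\<Sum>d\<in>{d \<in> {1..n}. d mod 2 = n mod 2}. d * (n choose ((n - d) div 2))^2)
         = (if odd n then n * ((n - 1) choose ((n - 1) div 2))^2
            else n * ((n - 1) choose (n div 2))^2)"
proof -
  define m where "m = (n - 1) div 2"
  have m: "2 * m < n" unfolding m_def using assms by linarith
  have "(\<Sum>d\<in>{d \<in> {1..n}. d mod 2 = n mod 2}. d * (n choose ((n - d) div 2))^2)
      = (\<Sum>k\<le>m. (n - 2*k) * (n choose k)^2)"
  proof (rule sum.reindex_bij_witness[where i = "\<lambda>k. n - 2*k" and j = "\<lambda>d. (n - d) div 2"])
    fix k assume "k \<in> {..m}"
    then show "(n - (n - 2*k)) div 2 = k" using m by auto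
  next
    fix k assume "k \<in> {..m}"
    then have "k \<le> (n - 1) div 2" by (simp add: m_def)
    then show "n - 2*k \<in> {d \<in> {1..n}. d mod 2 = n mod 2}" using a2[of k n] assms by auto
  next
    fix d assume d: "d \<in> {d \<in> {1..n}. d mod 2 = n mod 2}"
    then have "n - d = 2 * ((n - d) div 2)" using a1[of d n] by auto
    then show "n - 2 * ((n - d) div 2) = d" using d by auto
  next
    fix d assume "d \<in> {d \<in> {1..n}. d mod 2 = n mod 2}"
    then show "(n - d) div 2 \<in> {..m}" unfolding m_def using a3[of d n] by auto
  next
    fix d assume d: "d \<in> {d \<in> {1..n}. d mod 2 = n mod 2}"
    then have "n - d = 2 * ((n - d) div 2)" using a1[of d n] by auto
    then have "n - 2 * ((n - d) div 2) = d" using d by auto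
    then show "(n - 2 * ((n - d) div 2)) * (n choose ((n - d) div 2))^2
        = d * (n choose ((n - d) div 2))^2" by simp
  qed
  also have "... = n * ((n - 1) choose m)^2" using tele[OF m] .
  also have "... = (if odd n then n * ((n - 1) choose ((n - 1) div 2))^2
            else n * ((n - 1) choose (n div 2))^2)"
  proof (cases "odd n")
    case True then show ?thesis unfolding m_def by simp
  next
    case False
    then have "n div 2 \<le> n - 1" "n - 1 - n div 2 = m" using a4[OF False assms] unfolding m_def by auto
    then have "(n - 1) choose (n div 2) = (n - 1) choose m"
      using binomial_symmetric by metis
    then show ?thesis using False by simp
  qed
  finally show ?thesis .
qed

end
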